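(* Let $n$ be a non-negative integer and let $r,s\in\mathbb{C}\setminus\mathbb{Z}$ with $s\neq0$ and $r-s\notin\mathbb{Z}$. Then \[ \begin{aligned} \sum_{k=0}^{n}(-1)^{k}\binom{n}{k}\frac{H_s-H_{k+r-s}}{\binom{k+r}{s}}H_k &=H_n\left(\frac{r+1}{(r-s+1)^2}\frac{1}{\binom{n+r}{r-s+1}}+\frac{s}{r-s+1}\frac{H_{n+s-1}-H_{r-s+1}}{\binom{n+r}{r-s+1}}\right)+H_n\frac{H_{r-s}-H_s}{\binom{r}{s}}\\ &\quad+\sum_{k=0}^{n-1}H_{n-1-k}\frac{s(k+s)(H_{k+s}-H_{r-s+1})+k}{(k+s)^2\binom{r+k+1}{r-s+1}}. \end{aligned} \]
   Context: For complex $z$ not a negative integer, $H_z=\psi(z+1)+\gamma$ ($\psi$ the digamma function, $\gamma$ Euler's constant); for integers $n\ge 0$, $H_n=\sum_{j=1}^n 1/j$. Binomial coefficients with complex entries: $\binom{x}{y}=\frac{\Gamma(x+1)}{\Gamma(y+1)\Gamma(x-y+1)}$. *)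

theory Defs
  imports "HOL-Analysis.Analysis"
begin

text \<open>Harmonic number of a complex argument: H_z = psi(z+1) + gamma.\<close>
definition HC :: "complex \<Rightarrow> complex" where
  "HC z = Digamma (z + 1) + euler_mascheroni"

definition cbinom :: "complex \<Rightarrow> complex \<Rightarrow> complex" where
  "cbinom x y = Gamma (x + 1) / (Gamma (y + 1) * Gamma (x - y + 1))"

end

theory Submission
  imports Defs
begin


definition bt :: "(nat \<Rightarrow> complex) \<Rightarrow> nat \<Rightarrow> complex" where
  "bt a n = (\<Sum>k\<le>n. (-1)^k * of_nat (n choose k) * a k)"

lemma bt_0 [simp]: "bt a 0 = a 0"
  by (simp add: bt_def)

lemma bt_Suc_shift: "bt a (Suc n) = a 0 - (\<Sum>k\<le>n. (-1)^k * of_nat (Suc n choose Suc k) * a (Suc k))"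
  unfolding bt_def by (subst sum.atMost_Suc_shift) (simp add: sum_negf)

lemma bt_Suc: "bt a (Suc n) = bt a n - bt (\<lambda>k. a (Suc k)) n"
proof -
  have "(\<Sum>k\<le>n. (-1)^k * of_nat (Suc n choose Suc k) * a (Suc k))
      = (\<Sum>k\<le>n. (-1)^k * of_nat (n choose k) * a (Suc k)) + (\<Sum>k\<le>n. (-1)^k * of_nat (n choose Suc k) * a (Suc k))"
    by (simp add: sum.distrib[symmetric] algebra_simps)
  moreover have "bt a n = a 0 - (\<Sum>k\<le>n. (-1)^k * of_nat (n choose Suc k) * a (Suc k))"
  proof (cases n)
    case 0 then show ?thesis by simp
  next
    case (Suc m)
    have "bt a n = a 0 - (\<Sum>k\<le>m. (-1)^k * of_nat (n choose Suc k) * a (Suc k))"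
      using bt_Suc_shift[of a m] Suc by simp
    also have "(\<Sum>k\<le>m. (-1)^k * of_nat (n choose Suc k) * a (Suc k)) = (\<Sum>k\<le>n. (-1)^k * of_nat (n choose Suc k) * a (Suc k))"
      using Suc by (simp add: binomial_eq_0)
    finally show ?thesis .
  qed
  ultimately show ?thesis using bt_Suc_shift[of a n] by (simp add: bt_def)
qed

lemma bt_div: "(\<Sum>k\<le>n. (-1)^k * of_nat (n choose k) * a (Suc k) / of_nat (Suc k))
   = (a 0 - bt a (Suc n)) / of_nat (Suc n)"
proof -
  have "(\<Sum>k\<le>n. (-1)^k * of_nat (n choose k) * a (Suc k) / of_nat (Suc k))
     = (\<Sum>k\<le>n. (-1)^k * of_nat (Suc n choose Suc k) * a (Suc k)) / of_nat (Suc n)"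
    unfolding sum_divide_distrib
  proof (rule sum.cong[OF refl])
    fix k assume "k \<in> {..n}"
    define sk :: complex where "sk = of_nat (Suc k)"
    define sn :: complex where "sn = of_nat (Suc n)"
    define C :: complex where "C = of_nat (n choose k)"
    define C' :: complex where "C' = of_nat (Suc n choose Suc k)"
    have e: "sk * C' = sn * C"
    proof -
      have "(of_nat (Suc k * (Suc n choose Suc k)) :: complex) = of_nat (Suc n * (n choose k))"
        by (simp only: Suc_times_binomial)
      then show ?thesis unfolding sk_def sn_def C_def C'_def by (simp only: of_nat_mult)
    qed
    have nz: "sk \<noteq> 0" "sn \<noteq> 0" unfolding sk_def sn_def by (simp_all del: of_nat_Suc)
    have q: "C / sk = C' / sn" using e nz by (simp add: frac_eq_eq mult.commute)
    have "(-1)^k * C * a (Suc k) / sk = (-1)^k * a (Suc k) * (C / sk)" by simp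
    also have "\<dots> = (-1)^k * a (Suc k) * (C' / sn)" by (simp only: q)
    also have "\<dots> = (-1)^k * C' * a (Suc k) / sn" by simp
    finally show "(-1)^k * of_nat (n choose k) * a (Suc k) / of_nat (Suc k)
        = (-1)^k * of_nat (Suc n choose Suc k) * a (Suc k) / of_nat (Suc n)"
      unfolding sk_def sn_def C_def C'_def .
  qed
  then show ?thesis by (simp add: bt_Suc_shift)
qed

lemma harm_sum:
  "(\<Sum>k\<le>n. (-1)^k * of_nat (n choose k) * harm k * a k)
     = harm n * bt a n - (\<Sum>m<n. bt a m / of_nat (n - m))"
proof (induction n arbitrary: a)
  case 0 then show ?case by (simp add: harm_def bt_def)
next
  case (Suc n)
  have h1: "(\<Sum>k\<le>Suc n. (-1)^k * of_nat (Suc n choose k) * harm k * a k)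
      = bt (\<lambda>k. harm k * a k) (Suc n)" by (simp add: bt_def mult.assoc)
  also have "\<dots> = bt (\<lambda>k. harm k * a k) n - bt (\<lambda>k. harm (Suc k) * a (Suc k)) n"
    by (rule bt_Suc)
  also have "bt (\<lambda>k. harm (Suc k) * a (Suc k)) n = bt (\<lambda>k. harm k * a (Suc k)) n
        + (\<Sum>k\<le>n. (-1)^k * of_nat (n choose k) * a (Suc k) / of_nat (Suc k))"
    by (simp add: bt_def harm_Suc sum.distrib[symmetric] algebra_simps divide_inverse)
  also have "bt (\<lambda>k. harm k * a k) n = harm n * bt a n - (\<Sum>m<n. bt a m / of_nat (n - m))"
    using Suc.IH[of a] by (simp add: bt_def mult.assoc)
  also have "bt (\<lambda>k. harm k * a (Suc k)) n = harm n * bt (\<lambda>k. a (Suc k)) n - (\<Sum>m<n. bt (\<lambda>k. a (Suc k)) m / of_nat (n - m))"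
    using Suc.IH[of "\<lambda>k. a (Suc k)"] by (simp add: bt_def mult.assoc)
  also note bt_div
  finally have L: "(\<Sum>k\<le>Suc n. (-1)^k * of_nat (Suc n choose k) * harm k * a k) =
      harm n * bt a n - (\<Sum>m<n. bt a m / of_nat (n - m)) -
    (harm n * bt (\<lambda>k. a (Suc k)) n - (\<Sum>m<n. bt (\<lambda>k. a (Suc k)) m / of_nat (n - m)) +
     (a 0 - bt a (Suc n)) / of_nat (Suc n))" .
  have S: "(\<Sum>m<Suc n. bt a m / of_nat (Suc n - m)) = a 0 / of_nat (Suc n) + (\<Sum>m<n. bt a (Suc m) / of_nat (n - m))"
    by (subst sum.lessThan_Suc_shift) simp
  have B: "\<And>m. bt (\<lambda>k. a (Suc k)) m = bt a m - bt a (Suc m)" using bt_Suc by simp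
  have D: "(\<Sum>m<n. (bt a m - bt a (Suc m)) / of_nat (n - m))
     = (\<Sum>m<n. bt a m / of_nat (n - m)) - (\<Sum>m<n. bt a (Suc m) / of_nat (n - m))"
    by (simp only: diff_divide_distrib sum_subtractf)
  define P where "P = (\<Sum>m<n. bt a m / of_nat (n - m))"
  define Q where "Q = (\<Sum>m<n. bt a (Suc m) / of_nat (n - m))"
  define c :: complex where "c = of_nat (Suc n)"
  have hS: "harm (Suc n) = harm n + 1 / c" unfolding c_def by (simp add: harm_Suc divide_inverse del: of_nat_Suc)
  show ?case unfolding L S B D P_def[symmetric] Q_def[symmetric] c_def[symmetric] hS
    by (simp add: algebra_simps diff_divide_distrib add_divide_distrib)
qed

lemma abel_harm:
  "(\<Sum>m<n. b m / of_nat (n - m)) = b 0 * harm n + (\<Sum>k<n. (b (Suc k) - b k) * harm (n - 1 - k))"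
proof (induction n arbitrary: b)
  case 0 then show ?case by (simp add: harm_def)
next
  case (Suc n)
  have "(\<Sum>m<Suc n. b m / of_nat (Suc n - m)) = b 0 / of_nat (Suc n) + (\<Sum>m<n. b (Suc m) / of_nat (n - m))"
    by (subst sum.lessThan_Suc_shift) simp
  also have "(\<Sum>m<n. b (Suc m) / of_nat (n - m)) = b 1 * harm n + (\<Sum>k<n. (b (Suc (Suc k)) - b (Suc k)) * harm (n - 1 - k))"
    using Suc.IH[of "\<lambda>m. b (Suc m)"] by simp
  also have "(\<Sum>k<Suc n. (b (Suc k) - b k) * harm (Suc n - 1 - k)) = (b 1 - b 0) * harm n + (\<Sum>k<n. (b (Suc (Suc k)) - b (Suc k)) * harm (n - 1 - k))"
    by (subst sum.lessThan_Suc_shift) simp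
  ultimately show ?case by (simp add: harm_Suc algebra_simps divide_inverse)
qed

lemma sc_rec_u:
  fixes u s N x v w z R R2 :: complex
  assumes "u \<noteq> 0" "w \<noteq> 0" "v \<noteq> 0" "u = R - s" "w = R - s + 1" "v = N + s" "z = N + R" "R2 = R + 1"
  shows "v *(R/(u*u) + s/u*(x+1/v)) = z*(R/(u*u) + s/u*x) - w*(R2/(w*w) + s/w*(x - 1/w))"
  using assms(1-3) apply (simp add: field_simps)
  apply (simp add: assms(4-8) algebra_simps)
  done

lemma sc_c_u:
  fixes u s N x v z R :: complex
  assumes "u \<noteq> 0" "z \<noteq> 0" "v \<noteq> 0" "u = R - s" "z = N + R" "v = N + s"
  shows "(R/(u*u) + s/u*x) - v/z*(R/(u*u) + s/u*(x+1/v))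
     = (s* v *(x+1/v) + N)/(v *z)"
  using assms(1-3) apply (simp add: field_simps)
  apply (simp add: assms(4-6) algebra_simps)
  done

lemma sc_0:
  fixes u s y R :: complex
  assumes "u \<noteq> 0" "s \<noteq> 0" "R = u + s"
  shows "(y + 1/s) * s = u*(R/(u*u) + s/u*(y - 1/u))"
  using assms by (simp add: field_simps)

lemma notint_add: "(x::complex) \<notin> \<int> \<Longrightarrow> y \<in> \<int> \<Longrightarrow> x + y \<notin> \<int>"
  by (metis Ints_diff add_diff_cancel_right')

lemma notint_facts:
  assumes "(x::complex) \<notin> \<int>"
  shows "x \<notin> \<int>\<^sub>\<le>\<^sub>0" "x \<noteq> 0" "Gamma x \<noteq> 0" "Gamma (x + 1) = x * Gamma x"
        "Digamma (x + 1) = Digamma x + 1 / x"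
proof -
  show A: "x \<notin> \<int>\<^sub>\<le>\<^sub>0" using assms nonpos_Ints_Int by blast
  show B: "x \<noteq> 0" using assms by auto
  show "Gamma x \<noteq> 0" using A Gamma_nonzero by blast
  show "Gamma (x + 1) = x * Gamma x" using A Gamma_plus1 by blast
  show "Digamma (x + 1) = Digamma x + 1 / x" using B Digamma_plus1 by blast
qed

definition XG :: "complex \<Rightarrow> complex \<Rightarrow> nat \<Rightarrow> complex" where
  "XG s r n = Gamma (r - s + 2) * Gamma (of_nat n + s) / Gamma (of_nat n + r + 1) *
     ((r + 1) / (r - s + 1)^2 + s / (r - s + 1) * (Digamma (of_nat n + s) - Digamma (r - s + 2)))"

lemma XG_eq:
  shows "(r + 1) / (r - s + 1)^2 * (1 / cbinom (of_nat n + r) (r - s + 1))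
                + s / (r - s + 1) * (HC (of_nat n + s - 1) - HC (r - s + 1))
                    / cbinom (of_nat n + r) (r - s + 1) = XG s r n"
proof -
  have a1: "of_nat n + r - (r - s + 1) + 1 = of_nat n + s" by simp
  have a2: "r - s + 1 + 1 = r - s + 2" by simp
  have a3: "of_nat n + s - 1 + 1 = of_nat n + s" by simp
  define A where "A = Gamma (r - s + 2) * Gamma (of_nat n + s) / Gamma (of_nat n + r + 1)"
  have c: "cbinom (of_nat n + r) (r - s + 1) = 1 / A"
    unfolding cbinom_def a1 a2 A_def by simp
  show ?thesis unfolding XG_def HC_def c a2 a3 A_def[symmetric]
    by (simp add: algebra_simps)
qed

lemma XG_rec:
  assumes s: "s \<notin> \<int>" and r: "r \<notin> \<int>" and rs: "r - s \<notin> \<int>"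
  shows "XG s r (Suc n) = XG s r n - XG s (r + 1) n"
proof -
  have a1: "of_nat (Suc n) + s = (of_nat n + s) + 1" by simp
  have a2: "of_nat (Suc n) + r + 1 = (of_nat n + r + 1) + 1" by simp
  have a3: "r + 1 - s + 2 = (r - s + 2) + 1" by simp
  have a4: "of_nat n + (r + 1) + 1 = (of_nat n + r + 1) + 1" by simp
  have a5: "r + 1 - s + 1 = r - s + 2" by simp
  have a6: "r + 1 + 1 = r + 2" by simp
  have ns: "of_nat n + s \<notin> \<int>" using notint_add[OF s, of "of_nat n"] by (simp add: add_ac)
  have nr: "of_nat n + r + 1 \<notin> \<int>" using notint_add[OF r, of "of_nat n + 1"] by (simp add: add_ac)
  have nrs: "r - s + 2 \<notin> \<int>" using notint_add[OF rs, of 2] by simp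
  have nrs1: "r - s + 1 \<noteq> 0" using notint_facts(2)[OF notint_add[OF rs, of 1]] by simp
  note F = notint_facts[OF ns] notint_facts[OF nr] notint_facts[OF nrs]
  define g1 where "g1 = Gamma (r - s + 2)"
  define g2 where "g2 = Gamma (of_nat n + s)"
  define g3 where "g3 = Gamma (of_nat n + r + 1)"
  define p where "p = Digamma (of_nat n + s)"
  define q where "q = Digamma (r - s + 2)"
  define u where "u = r - s + 1"
  define w where "w = r - s + 2"
  define v where "v = of_nat n + s"
  define z where "z = of_nat n + r + 1"
  define R where "R = r + 1"
  define R2 where "R2 = r + 2"
  define A1 where "A1 = R/(u*u) + s/u*((p - q) + 1/v)"
  define A2 where "A2 = R/(u*u) + s/u*(p - q)"
  define A3 where "A3 = R2/(w*w) + s/w*((p - q) - 1/w)"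
  have f1: "XG s r (Suc n) = g1*(v *g2)/(z*g3) * A1"
    unfolding XG_def a1 a2 F(4,5,9) by (simp add: g1_def g2_def g3_def p_def q_def u_def v_def z_def R_def A1_def power2_eq_square)
  have f2: "XG s r n = g1*g2/g3 * A2"
    unfolding XG_def by (simp add: g1_def g2_def g3_def p_def q_def u_def R_def A2_def power2_eq_square)
  have f3: "XG s (r + 1) n = (w*g1)*g2/(z*g3) * A3"
    unfolding XG_def a3 a4 a5 a6 F(9,14,15) by (simp add: g1_def g2_def g3_def p_def q_def w_def z_def R2_def A3_def power2_eq_square)
  have sc: "v * A1 = z * A2 - w * A3" unfolding A1_def A2_def A3_def
    by (rule sc_rec_u) (use F(2,7,12) nrs1 in \<open>simp_all add: u_def w_def v_def z_def R_def R2_def\<close>)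
  have "z \<noteq> 0" "g3 \<noteq> 0" using F(7,8) by (simp_all add: z_def g3_def)
  then show ?thesis unfolding f1 f2 f3
  proof -
    assume "z \<noteq> 0" "g3 \<noteq> 0"
    have "g1*(v *g2)/(z*g3) * A1 = g1*g2/(z*g3) * (v *A1)" by simp
    also have "\<dots> = g1*g2/(z*g3) * (z * A2 - w * A3)" by (simp only: sc)
    also have "\<dots> = g1*g2/g3 * A2 - (w*g1)*g2/(z*g3) * A3"
      using \<open>z \<noteq> 0\<close> \<open>g3 \<noteq> 0\<close> by (simp add: field_simps)
    finally show "g1*(v *g2)/(z*g3) * A1 = g1*g2/g3 * A2 - (w*g1)*g2/(z*g3) * A3" .
  qed
qed


lemma XG_0:
  assumes s: "s \<notin> \<int>" and rs: "r - s \<notin> \<int>"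
  shows "(HC s - HC (r - s)) / cbinom r s = XG s r 0"
proof -
  have a1: "of_nat 0 + s = s" by simp
  have a2: "of_nat 0 + r + 1 = r + 1" by simp
  have a3: "r - s + 2 = (r - s + 1) + 1" by simp
  have a4: "r - s + 1 = (r - s) + 1" by simp
  have nrs1: "r - s + 1 \<notin> \<int>" using notint_add[OF rs, of 1] by simp
  note F = notint_facts[OF s] notint_facts[OF nrs1] notint_facts[OF rs]
  define g where "g = Gamma s"
  define h where "h = Gamma (r - s + 1)"
  define G where "G = Gamma (r + 1)"
  define y where "y = Digamma s - Digamma (r - s + 1)"
  define u where "u = r - s + 1"
  define R where "R = r + 1"
  define K where "K = R/(u*u) + s/u*(y - 1/u)"
  have l: "(HC s - HC (r - s)) / cbinom r s = (y + 1/s) * s * g * h / G"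
    unfolding HC_def cbinom_def F(5) F(4) divide_divide_eq_right
    by (simp add: y_def g_def h_def G_def algebra_simps)
  have rr: "XG s r 0 = u * h * g / G * K"
    unfolding XG_def a1 a2 a3 F(9,10)
    by (simp add: g_def h_def G_def y_def u_def R_def K_def power2_eq_square algebra_simps)
  have sc: "(y + 1/s) * s = u * K" unfolding K_def
    by (rule sc_0) (use F(2,7) in \<open>simp_all add: u_def R_def\<close>)
  show ?thesis unfolding l rr
  proof -
    have "(y + 1/s) * s * g * h / G = ((y + 1/s) * s) * (g * h / G)" by simp
    also have "\<dots> = (u * K) * (g * h / G)" by (simp only: sc)
    finally show "(y + 1/s) * s * g * h / G = u * h * g / G * K" by (simp add: ac_simps)
  qed
qed

lemma bt_closed:
  assumes s: "s \<notin> \<int>"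
  shows "r \<notin> \<int> \<Longrightarrow> r - s \<notin> \<int> \<Longrightarrow>
    bt (\<lambda>k. (HC s - HC (of_nat k + r - s)) / cbinom (of_nat k + r) s) n = XG s r n"
proof (induction n arbitrary: r)
  case 0
  then show ?case using XG_0[OF s 0(2)] by simp
next
  case (Suc n)
  have r1: "r + 1 \<notin> \<int>" using notint_add[OF Suc.prems(1), of 1] by simp
  have rs1: "r + 1 - s \<notin> \<int>" using notint_add[OF Suc.prems(2), of 1] by (simp add: algebra_simps)
  have sh: "(\<lambda>k. (HC s - HC (of_nat (Suc k) + r - s)) / cbinom (of_nat (Suc k) + r) s)
      = (\<lambda>k. (HC s - HC (of_nat k + (r + 1) - s)) / cbinom (of_nat k + (r + 1)) s)"
    by (simp add: algebra_simps)
  show ?case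
    unfolding bt_Suc[of _ n] sh Suc.IH[OF Suc.prems] Suc.IH[OF r1 rs1]
    by (rule XG_rec[OF s Suc.prems, symmetric])
qed

lemma XG_c:
  assumes s: "s \<notin> \<int>" and r: "r \<notin> \<int>" and rs: "r - s \<notin> \<int>"
  shows "XG s r k - XG s r (Suc k) = (s * (of_nat k + s) * (HC (of_nat k + s) - HC (r - s + 1)) + of_nat k)
            / ((of_nat k + s)^2 * cbinom (r + of_nat k + 1) (r - s + 1))"
proof -
  have a1: "of_nat (Suc k) + s = (of_nat k + s) + 1" by simp
  have a2: "of_nat (Suc k) + r + 1 = (of_nat k + r + 1) + 1" by simp
  have b1: "r + of_nat k + 1 + 1 = (of_nat k + r + 1) + 1" by simp
  have b2: "r - s + 1 + 1 = r - s + 2" by simp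
  have b3: "r + of_nat k + 1 - (r - s + 1) + 1 = (of_nat k + s) + 1" by simp
  have ns: "of_nat k + s \<notin> \<int>" using notint_add[OF s, of "of_nat k"] by (simp add: add_ac)
  have nr: "of_nat k + r + 1 \<notin> \<int>" using notint_add[OF r, of "of_nat k + 1"] by (simp add: add_ac)
  have nrs1: "r - s + 1 \<noteq> 0" using notint_facts(2)[OF notint_add[OF rs, of 1]] by simp
  have nrs: "r - s + 2 \<notin> \<int>" using notint_add[OF rs, of 2] by simp
  note F = notint_facts[OF ns] notint_facts[OF nr] notint_facts[OF nrs]
  define g1 where "g1 = Gamma (r - s + 2)"
  define g2 where "g2 = Gamma (of_nat k + s)"
  define g3 where "g3 = Gamma (of_nat k + r + 1)"
  define p where "p = Digamma (of_nat k + s)"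
  define q where "q = Digamma (r - s + 2)"
  define u where "u = r - s + 1"
  define v where "v = of_nat k + s"
  define z where "z = of_nat k + r + 1"
  define R where "R = r + 1"
  define N where "N = (of_nat k :: complex)"
  define A1 where "A1 = R/(u*u) + s/u*((p - q) + 1/v)"
  define A2 where "A2 = R/(u*u) + s/u*(p - q)"
  have f1: "XG s r (Suc k) = g1*(v * g2)/(z*g3) * A1"
    unfolding XG_def a1 a2 F(4,5,9) by (simp add: g1_def g2_def g3_def p_def q_def u_def v_def z_def R_def A1_def power2_eq_square)
  have f2: "XG s r k = g1*g2/g3 * A2"
    unfolding XG_def by (simp add: g1_def g2_def g3_def p_def q_def u_def R_def A2_def power2_eq_square)
  have f3: "(s * (of_nat k + s) * (HC (of_nat k + s) - HC (r - s + 1)) + of_nat k)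
            / ((of_nat k + s)^2 * cbinom (r + of_nat k + 1) (r - s + 1))
         = (s * v * ((p - q) + 1/v) + N) / (v * v * ((z * g3) / (g1 * (v * g2))))"
    unfolding HC_def cbinom_def b1 b2 b3 F(4,5,9)
    by (simp add: g1_def g2_def g3_def p_def q_def v_def z_def N_def power2_eq_square algebra_simps)
  have sc: "A2 - v / z * A1 = (s * v * ((p - q) + 1/v) + N) / (v * z)" unfolding A1_def A2_def
    by (rule sc_c_u) (use F(2,7) nrs1 in \<open>simp_all add: u_def v_def z_def R_def N_def\<close>)
  have nz: "z \<noteq> 0" "g3 \<noteq> 0" "v \<noteq> 0" "g2 \<noteq> 0" "g1 \<noteq> 0"
    using F(2,3,7,8,13) by (simp_all add: z_def g3_def v_def g2_def g1_def)
  define B where "B = s * v * ((p - q) + 1/v) + N"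
  show ?thesis unfolding f1 f2 f3 B_def[symmetric]
  proof -
    have "g1*g2/g3 * A2 - g1*(v * g2)/(z*g3) * A1 = g1*g2/g3 * (A2 - v / z * A1)"
      by (simp add: algebra_simps)
    also have "\<dots> = g1*g2/g3 * (B / (v * z))" unfolding sc B_def ..
    also have "\<dots> = B / (v * v * ((z * g3) / (g1 * (v * g2))))"
      using nz by (simp add: field_simps)
    finally show "g1*g2/g3 * A2 - g1*(v * g2)/(z*g3) * A1 = B / (v * v * ((z * g3) / (g1 * (v * g2))))" .
  qed
qed


theorem theorem15:
  fixes n :: nat and r s :: complex
  assumes "r \<notin> \<int>" and "s \<notin> \<int>" and "s \<noteq> 0" and "r - s \<notin> \<int>"
  shows "(\<Sum>k=0..n. (-1)^k * of_nat (n choose k)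
            * (HC s - HC (of_nat k + r - s)) / cbinom (of_nat k + r) s * harm k)
    = harm n * ((r + 1) / (r - s + 1)^2 * (1 / cbinom (of_nat n + r) (r - s + 1))
                + s / (r - s + 1) * (HC (of_nat n + s - 1) - HC (r - s + 1))
                    / cbinom (of_nat n + r) (r - s + 1))
      + harm n * (HC (r - s) - HC s) / cbinom r s
      + (\<Sum>k=0..<n. harm (n - 1 - k)
            * (s * (of_nat k + s) * (HC (of_nat k + s) - HC (r - s + 1)) + of_nat k)
            / ((of_nat k + s)^2 * cbinom (r + of_nat k + 1) (r - s + 1)))"
  proof -
  define a where "a = (\<lambda>k. (HC s - HC (of_nat k + r - s)) / cbinom (of_nat k + r) s)"
  have bta: "\<And>m. bt a m = XG s r m" unfolding a_def by (rule bt_closed[OF assms(2) assms(1) assms(4)])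
  have b0: "bt a 0 = (HC s - HC (r - s)) / cbinom r s" by (simp add: a_def)
  have "(\<Sum>k=0..n. (-1)^k * of_nat (n choose k)
            * (HC s - HC (of_nat k + r - s)) / cbinom (of_nat k + r) s * harm k)
      = (\<Sum>k\<le>n. (-1)^k * of_nat (n choose k) * harm k * a k)"
    unfolding atLeast0AtMost a_def by (rule sum.cong) (simp_all add: divide_inverse mult_ac)
  also have "\<dots> = harm n * bt a n - (\<Sum>m<n. bt a m / of_nat (n - m))" by (rule harm_sum)
  also have "(\<Sum>m<n. bt a m / of_nat (n - m)) = bt a 0 * harm n + (\<Sum>k<n. (bt a (Suc k) - bt a k) * harm (n - 1 - k))"
    by (rule abel_harm)
  finally have L: "(\<Sum>k=0..n. (-1)^k * of_nat (n choose k)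
            * (HC s - HC (of_nat k + r - s)) / cbinom (of_nat k + r) s * harm k)
      = harm n * XG s r n - (XG s r 0 * harm n
          + (\<Sum>k<n. (XG s r (Suc k) - XG s r k) * harm (n - 1 - k)))"
    unfolding bta .
  have R1: "(\<Sum>k=0..<n. harm (n - 1 - k)
            * (s * (of_nat k + s) * (HC (of_nat k + s) - HC (r - s + 1)) + of_nat k)
            / ((of_nat k + s)^2 * cbinom (r + of_nat k + 1) (r - s + 1)))
       = (\<Sum>k<n. harm (n - 1 - k) * (XG s r k - XG s r (Suc k)))"
    unfolding atLeast0LessThan
  proof (rule sum.cong[OF refl])
    fix k assume "k \<in> {..<n}"
    show "harm (n - 1 - k)
            * (s * (of_nat k + s) * (HC (of_nat k + s) - HC (r - s + 1)) + of_nat k)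
            / ((of_nat k + s)^2 * cbinom (r + of_nat k + 1) (r - s + 1))
       = harm (n - 1 - k) * (XG s r k - XG s r (Suc k))"
      unfolding XG_c[OF assms(2,1,4), of k] by (simp only: times_divide_eq_right)
  qed
  have R2: "harm n * ((r + 1) / (r - s + 1)^2 * (1 / cbinom (of_nat n + r) (r - s + 1))
                + s / (r - s + 1) * (HC (of_nat n + s - 1) - HC (r - s + 1))
                    / cbinom (of_nat n + r) (r - s + 1)) = harm n * XG s r n"
    by (simp only: XG_eq)
  have S: "(\<Sum>k<n. (XG s r (Suc k) - XG s r k) * harm (n - 1 - k))
       = - (\<Sum>k<n. harm (n - 1 - k) * (XG s r k - XG s r (Suc k)))"
    by (simp add: sum_negf[symmetric] algebra_simps)
  have T: "harm n * (HC (r - s) - HC s) / cbinom r s = - (XG s r 0 * harm n)"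
    unfolding bta[symmetric] b0 by (simp add: divide_inverse algebra_simps)
  show ?thesis unfolding L R1 R2 S T by (simp add: algebra_simps)
qed

end
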